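(* Let $n$ be a positive integer and let $G\subset\mathrm{GL}_2(\mathbb{Z}/n)$ be a subgroup containing $\mathrm{SL}_2^+(\mathbb{Z}/n)$, acting on $(\mathbb{Z}/n)^2$ tautologically. If $n$ is odd, then $H^1(G,(\mathbb{Z}/n)^2)=0$. If $n=2^r m$ with $m$ odd and $r\geq1$, then the abelian group $H^1(G,(\mathbb{Z}/n)^2)$ is annihilated by $2^{r-1}$.
   Context: For an integer $n>1$, $\mathrm{SL}_2^+(\mathbb{Z}/n)$ is defined as $\mathrm{SL}_2(\mathbb{Z}/n)$ if $n$ is odd, and, if $n$ is even, as the kernel of the composite $\mathrm{SL}_2(\mathbb{Z}/n)\to\mathrm{SL}_2(\mathbb{Z}/2)\cong S_3\to\{\pm1\}$ of reduction modulo $2$ and the signature. *)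

theory Defs
  imports "HOL-Algebra.Group" "HOL-Combinatorics.Permutations"
begin

text \<open>Elements of Z/n are represented by their canonical representatives in {0..<n} (as integers).
  A 2x2 matrix (a b; c d) over Z/n is the tuple (a,b,c,d); a vector is a pair (x,y).\<close>

type_synonym mat2 = "int \<times> int \<times> int \<times> int"
type_synonym vec2 = "int \<times> int"

fun det2 :: "mat2 \<Rightarrow> int" where
  "det2 (a,b,c,d) = a*d - b*c"

fun mmul :: "nat \<Rightarrow> mat2 \<Rightarrow> mat2 \<Rightarrow> mat2" where
  "mmul n (a,b,c,d) (e,f,g,h) =
     ((a*e+b*g) mod int n, (a*f+b*h) mod int n, (c*e+d*g) mod int n, (c*f+d*h) mod int n)"

fun mentries :: "mat2 \<Rightarrow> int set" where
  "mentries (a,b,c,d) = {a,b,c,d}"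

definition GL2 :: "nat \<Rightarrow> mat2 monoid" where
  "GL2 n = \<lparr> carrier = {M. mentries M \<subseteq> {0..<int n} \<and> coprime (det2 M) (int n)},
             monoid.mult = mmul n,
             monoid.one = (1 mod int n, 0, 0, 1 mod int n) \<rparr>"

definition SL2 :: "nat \<Rightarrow> mat2 set" where
  "SL2 n = {M \<in> carrier (GL2 n). det2 M mod int n = 1 mod int n}"

text \<open>Action of the reduction mod 2 of a matrix on vectors, and the induced permutation of
  the three nonzero vectors of (Z/2)^2 (this is the isomorphism SL_2(Z/2) = S_3).\<close>
fun act2 :: "mat2 \<Rightarrow> vec2 \<Rightarrow> vec2" where
  "act2 (a,b,c,d) (x,y) = ((a*x+b*y) mod 2, (c*x+d*y) mod 2)"

definition nonzero2 :: "vec2 set" where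
  "nonzero2 = {(1,0),(0,1),(1,1)}"

definition perm2 :: "mat2 \<Rightarrow> vec2 \<Rightarrow> vec2" where
  "perm2 M = (\<lambda>v. if v \<in> nonzero2 then act2 M v else v)"

text \<open>SL_2^+(Z/n): SL_2 for n odd; for n even the kernel of the signature of the mod-2 reduction.\<close>
definition SL2plus :: "nat \<Rightarrow> mat2 set" where
  "SL2plus n = (if odd n then SL2 n else {M \<in> SL2 n. sign (perm2 M) = (1::int)})"

definition V :: "nat \<Rightarrow> vec2 set" where
  "V n = {0..<int n} \<times> {0..<int n}"

fun mvec :: "nat \<Rightarrow> mat2 \<Rightarrow> vec2 \<Rightarrow> vec2" where
  "mvec n (a,b,c,d) (x,y) = ((a*x+b*y) mod int n, (c*x+d*y) mod int n)"

fun vadd :: "nat \<Rightarrow> vec2 \<Rightarrow> vec2 \<Rightarrow> vec2" where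
  "vadd n (x,y) (u,w) = ((x+u) mod int n, (y+w) mod int n)"

fun vsub :: "nat \<Rightarrow> vec2 \<Rightarrow> vec2 \<Rightarrow> vec2" where
  "vsub n (x,y) (u,w) = ((x-u) mod int n, (y-w) mod int n)"

fun vscale :: "nat \<Rightarrow> int \<Rightarrow> vec2 \<Rightarrow> vec2" where
  "vscale n k (x,y) = ((k*x) mod int n, (k*y) mod int n)"

text \<open>1-cocycles (crossed homomorphisms) and 1-coboundaries of G with values in (Z/n)^2;
  H^1(G,(Z/n)^2) = Z1 / B1.\<close>
definition Z1 :: "nat \<Rightarrow> mat2 set \<Rightarrow> (mat2 \<Rightarrow> vec2) set" where
  "Z1 n G = {f. (\<forall>g\<in>G. f g \<in> V n) \<and>
                (\<forall>g\<in>G. \<forall>h\<in>G. f (mmul n g h) = vadd n (f g) (mvec n g (f h)))}"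

definition B1 :: "nat \<Rightarrow> mat2 set \<Rightarrow> (mat2 \<Rightarrow> vec2) set" where
  "B1 n G = {f. \<exists>v\<in>V n. \<forall>g\<in>G. f g = vsub n (mvec n g v) v}"

end

theory Submission
  imports Defs "HOL-Library.Product_Plus" "HOL-Number_Theory.Number_Theory"
begin


fun mv :: "mat2 \<Rightarrow> vec2 \<Rightarrow> vec2" where
  "mv (a,b,c,d) (x,y) = (a*x+b*y, c*x+d*y)"
fun mm :: "mat2 \<Rightarrow> mat2 \<Rightarrow> mat2" where
  "mm (a,b,c,d) (e,f,g,h) = (a*e+b*g, a*f+b*h, c*e+d*g, c*f+d*h)"
fun vm :: "int \<Rightarrow> vec2 \<Rightarrow> vec2" where
  "vm N (x,y) = (x mod N, y mod N)"
fun mmod :: "int \<Rightarrow> mat2 \<Rightarrow> mat2" where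
  "mmod N (a,b,c,d) = (a mod N, b mod N, c mod N, d mod N)"
fun sv :: "int \<Rightarrow> vec2 \<Rightarrow> vec2" where
  "sv k (x,y) = (k*x, k*y)"
fun msc :: "int \<Rightarrow> mat2 \<Rightarrow> mat2" where
  "msc k (a,b,c,d) = (k*a, k*b, k*c, k*d)"
definition vd :: "int \<Rightarrow> vec2 \<Rightarrow> bool" where
  "vd N u \<longleftrightarrow> N dvd fst u \<and> N dvd snd u"
fun md :: "int \<Rightarrow> mat2 \<Rightarrow> bool" where
  "md N (a,b,c,d) \<longleftrightarrow> N dvd a \<and> N dvd b \<and> N dvd c \<and> N dvd d"

lemma mvec_eq: "mvec n M u = vm (int n) (mv M u)"
  by (cases M; cases u) auto
lemma vadd_eq: "vadd n u w = vm (int n) (u + w)"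
  by (cases u; cases w) auto
lemma vsub_eq: "vsub n u w = vm (int n) (u - w)"
  by (cases u; cases w) auto
lemma vscale_eq: "vscale n k u = vm (int n) (sv k u)"
  by (cases u) auto
lemma mmul_eq: "mmul n M M' = mmod (int n) (mm M M')"
  by (cases M; cases M') auto

lemma mv_add: "mv M (u + w) = mv M u + mv M w"
  by (cases M; cases u; cases w) (auto simp: algebra_simps)
lemma mv_diff: "mv M (u - w) = mv M u - mv M w"
  by (cases M; cases u; cases w) (auto simp: algebra_simps)
lemma mv_sv: "mv M (sv k u) = sv k (mv M u)"
  by (cases M; cases u) (auto simp: algebra_simps)
lemma mv_mm: "mv (mm M M') u = mv M (mv M' u)"
  by (cases M; cases M'; cases u) (auto simp: algebra_simps)
lemma mv_mdiff: "mv (M - M') u = mv M u - mv M' u"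
  by (cases M; cases M'; cases u) (auto simp: algebra_simps)

lemma vd_add: "vd N u \<Longrightarrow> vd N w \<Longrightarrow> vd N (u + w)"
  by (auto simp: vd_def)
lemma vd_diff: "vd N u \<Longrightarrow> vd N w \<Longrightarrow> vd N (u - w)"
  by (auto simp: vd_def)
lemma vd_uminus: "vd N u \<Longrightarrow> vd N (- u)"
  by (auto simp: vd_def)
lemma vd_zero: "vd N 0"
  by (auto simp: vd_def)
lemma vd_mv: "vd N u \<Longrightarrow> vd N (mv M u)"
  by (cases M; cases u) (auto simp: vd_def)
lemma vd_sv: "vd N u \<Longrightarrow> vd N (sv k u)"
  by (cases u) (auto simp: vd_def)
lemma vd_sv2: "N dvd k \<Longrightarrow> vd N (sv k u)"
  by (cases u) (auto simp: vd_def)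
lemma md_mv: "md N M \<Longrightarrow> vd N (mv M u)"
  by (cases M; cases u) (auto simp: vd_def)
lemma dvd_mod_diff: "(N::int) dvd x mod N - x"
  by (simp add: mod_eq_dvd_iff[symmetric])
lemma vm_vd: "vd N (vm N u - u)"
  by (cases u) (auto simp: vd_def dvd_mod_diff)
lemma vm_eq: "vd N (u - w) \<Longrightarrow> vm N u = vm N w"
  by (cases u; cases w) (auto simp: vd_def mod_eq_dvd_iff)
lemma mmod_md: "md N (mmod N M - M)"
  by (cases M) (auto simp: dvd_mod_diff)
lemma mmod_eq: "md N (M - M') \<Longrightarrow> mmod N M = mmod N M'"
  by (cases M; cases M') (auto simp: mod_eq_dvd_iff)
lemma vm_V: "u \<in> V n \<Longrightarrow> vm (int n) u = u"
  by (cases u) (auto simp: V_def)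
lemma vm_in_V: "n > 0 \<Longrightarrow> vm (int n) u \<in> V n"
  by (cases u) (auto simp: V_def)
lemma carrier_mmod: "M \<in> carrier (GL2 n) \<Longrightarrow> mmod (int n) M = M"
  by (cases M) (auto simp: GL2_def)
lemma mmul_mmod: "mmod (int n) (mm M (mmul n M' M'')) = mmod (int n) (mm M (mm M' M''))"
proof -
  have "md (int n) (mm M (mmul n M' M'') - mm M (mm M' M''))"
  proof -
    obtain a b c d where M: "M = (a,b,c,d)" by (cases M) auto
    obtain x1 x2 x3 x4 where X: "mmul n M' M'' - mm M' M'' = (x1,x2,x3,x4)" by (cases "mmul n M' M'' - mm M' M''") auto
    have h: "md (int n) (x1,x2,x3,x4)" using mmod_md[of "int n" "mm M' M''"] X by (simp add: mmul_eq)
    have "mm M (mmul n M' M'') - mm M (mm M' M'') = mm M (mmul n M' M'' - mm M' M'')"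
      by (cases M; cases M'; cases "mmul n M' M''"; cases "mm M' M''") (auto simp: algebra_simps)
    then show ?thesis using h X M by auto
  qed
  then show ?thesis by (rule mmod_eq)
qed



lemma sg_mult: "subgroup G (GL2 n) \<Longrightarrow> g \<in> G \<Longrightarrow> h \<in> G \<Longrightarrow> mmul n g h \<in> G"
  using subgroup.m_closed[of G "GL2 n" g h] by (simp add: GL2_def)
lemma sg_carr: "subgroup G (GL2 n) \<Longrightarrow> g \<in> G \<Longrightarrow> g \<in> carrier (GL2 n)"
  using subgroup.subset by blast

lemma Z1_V: "f \<in> Z1 n G \<Longrightarrow> g \<in> G \<Longrightarrow> f g \<in> V n"
  by (simp add: Z1_def)

lemma coc:
  assumes "f \<in> Z1 n G" "g \<in> G" "h \<in> G"
  shows "vd (int n) (f (mmul n g h) - (f g + mv g (f h)))"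
proof -
  let ?N = "int n"
  define m where "m = mv g (f h)"
  define X where "X = f g + vm ?N m"
  have "f (mmul n g h) = vm ?N X"
    using assms by (simp add: Z1_def vadd_eq mvec_eq X_def m_def)
  then have "f (mmul n g h) - (f g + mv g (f h)) = (vm ?N X - X) + (vm ?N m - m)"
    by (simp add: X_def m_def algebra_simps)
  then show ?thesis by (simp add: vd_add vm_vd)
qed

lemma inv_lemma:
  assumes "coprime ((c1-1)*(c4-1) - c2*c3) N" and "vd N (mv (c1,c2,c3,c4) X - X)"
  shows "vd N X"
proof -
  obtain x y where X: "X = (x,y)" by (cases X) auto
  let ?D = "(c1-1)*(c4-1) - c2*c3"
  have h1: "N dvd c1*x + c2*y - x" and h2: "N dvd c3*x + c4*y - y"
    using assms(2) X by (auto simp: vd_def)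
  have cp: "coprime N ?D" using assms(1) by (simp add: coprime_commute)
  have "?D * x = (c4-1)*(c1*x + c2*y - x) - c2*(c3*x + c4*y - y)" by (simp add: algebra_simps)
  then have "N dvd ?D * x" using h1 h2 by (metis dvd_diff dvd_mult)
  then have "N dvd x" using cp coprime_dvd_mult_right_iff by blast
  have "?D * y = (c1-1)*(c3*x + c4*y - y) - c3*(c1*x + c2*y - x)" by (simp add: algebra_simps)
  then have "N dvd ?D * y" using h1 h2 by (metis dvd_diff dvd_mult)
  then have "N dvd y" using cp coprime_dvd_mult_right_iff by blast
  show ?thesis using \<open>N dvd x\<close> \<open>N dvd y\<close> X by (simp add: vd_def)
qed

lemma solve_lemma:
  assumes "coprime ((c1-1)*(c4-1) - c2*c3) (int n)" "n > 0"
  shows "\<exists>v\<in>V n. vd (int n) (mv (c1,c2,c3,c4) v - v - P)"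
proof -
  let ?N = "int n" and ?D = "(c1-1)*(c4-1) - c2*c3"
  obtain u w where uw: "u * ?D + w * ?N = gcd ?D ?N" using bezout_int by blast
  then have uw1: "u * ?D + w * ?N = 1" using assms(1) by simp
  have dv: "?N dvd u * ?D - 1" using uw1 by (metis add_diff_cancel_left' dvd_minus_iff dvd_triv_right minus_diff_eq)
  obtain p q where P: "P = (p,q)" by (cases P) auto
  define w0 where "w0 = sv u ((c4-1)*p - c2*q, -c3*p + (c1-1)*q)"
  have "mv (c1,c2,c3,c4) w0 - w0 - P = sv (u * ?D - 1) P"
    by (simp add: w0_def P algebra_simps)
  then have h: "vd ?N (mv (c1,c2,c3,c4) w0 - w0 - P)" using dv by (simp add: vd_sv2)
  define v where "v = vm ?N w0"
  have idt: "mv (c1,c2,c3,c4) v - v - P = (mv (c1,c2,c3,c4) w0 - w0 - P) + mv (c1,c2,c3,c4) (v - w0) - (v - w0)"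
    by (simp add: mv_diff algebra_simps)
  have "vd ?N (mv (c1,c2,c3,c4) v - v - P)"
    unfolding idt unfolding v_def by (rule vd_diff[OF vd_add[OF h vd_mv[OF vm_vd]] vm_vd])
  moreover have "v \<in> V n" using assms(2) by (simp add: v_def vm_in_V)
  ultimately show ?thesis by blast
qed

lemma md_eq_vd: "mmod N M = mmod N M' \<Longrightarrow> vd N (mv M u - mv M' u)"
proof -
  assume e: "mmod N M = mmod N M'"
  have "mv M u - mv M' u = mv (mmod N M' - M') u - mv (mmod N M - M) u"
    using e by (simp add: mv_mdiff)
  then show ?thesis by (simp add: vd_diff md_mv mmod_md)
qed

lemma id1: "mv (c1,c2,c3,c4) ((x,y) - (mv (g1,g2,g3,g4) (v1,v2) - (v1,v2))) - ((x,y) - (mv (g1,g2,g3,g4) (v1,v2) - (v1,v2))) =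
   (mv (c1,c2,c3,c4) (v1,v2) - (v1,v2) - (p1,p2)) - ((x,y) + mv (g1,g2,g3,g4) (p1,p2) - ((p1,p2) + mv (c1,c2,c3,c4) (x,y)))
   - mv (g1,g2,g3,g4) (mv (c1,c2,c3,c4) (v1,v2) - (v1,v2) - (p1,p2))
   + (mv (g1,g2,g3,g4) (mv (c1,c2,c3,c4) (v1,v2)) - mv (c1,c2,c3,c4) (mv (g1,g2,g3,g4) (v1,v2)))"
  by (simp add: algebra_simps)
lemma id2: "mv (c1,c2,c3,c4) ((x,y) - (mv (g1,g2,g3,g4) (v1,v2) - (v1,v2))) - ((x,y) - (mv (g1,g2,g3,g4) (v1,v2) - (v1,v2))) =
   (mv (c1,c2,c3,c4) (v1,v2) - (v1,v2) - (p1,p2)) - (mv (c1,c2,c3,c4) (mv (g1,g2,g3,g4) (mv (c1,c2,c3,c4) (v1,v2))) - mv (g1,g2,g3,g4) (v1,v2))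
   + mv (c1,c2,c3,c4) (mv (g1,g2,g3,g4) (mv (c1,c2,c3,c4) (v1,v2) - (v1,v2) - (p1,p2)))
   - mv (c1,c2,c3,c4) ((q1,q2) - ((x,y) + mv (g1,g2,g3,g4) (p1,p2))) - ((x,y) - ((p1,p2) + mv (c1,c2,c3,c4) (q1,q2)))"
  by (simp add: algebra_simps)

lemma capproach:
  assumes n: "n > 0" and sg: "subgroup G (GL2 n)" and f: "f \<in> Z1 n G"
    and cG: "(c1,c2,c3,c4) \<in> G"
    and cop: "coprime ((c1-1)*(c4-1) - c2*c3) (int n)"
    and hyp: "\<forall>g\<in>G. mmul n g (c1,c2,c3,c4) = mmul n (c1,c2,c3,c4) g \<or>
                     mmul n (c1,c2,c3,c4) (mmul n g (c1,c2,c3,c4)) = g"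
  shows "f \<in> B1 n G"
proof -
  let ?N = "int n"
  define c where "c = (c1,c2,c3,c4)"
  have cG': "c \<in> G" using cG c_def by simp
  define P where "P = f c"
  obtain v where vV: "v \<in> V n" and H2: "vd ?N (mv c v - v - P)"
    using solve_lemma[OF cop n, of P] c_def by blast
  have "\<forall>g\<in>G. f g = vsub n (mvec n g v) v"
  proof
    fix g assume gG: "g \<in> G"
    define F where "F = f g"
    define X where "X = F - (mv g v - v)"
    obtain g1 g2 g3 g4 where gg: "g = (g1,g2,g3,g4)" by (cases g) auto
    obtain v1 v2 where vv: "v = (v1,v2)" by (cases v) auto
    obtain p1 p2 where PP: "P = (p1,p2)" by (cases P) auto
    obtain x y where FF: "F = (x,y)" by (cases F) auto
    have "vd ?N (mv c X - X)"
    proof (cases "mmul n g c = mmul n c g")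
      case True
      have a1: "vd ?N (f (mmul n g c) - (F + mv g P))" using coc[OF f gG cG'] F_def P_def by simp
      have a2: "vd ?N (f (mmul n c g) - (P + mv c F))" using coc[OF f cG' gG] F_def P_def by simp
      have H1: "vd ?N (F + mv g P - (P + mv c F))"
      proof -
        have idt: "F + mv g P - (P + mv c F) = (f (mmul n c g) - (P + mv c F)) - (f (mmul n g c) - (F + mv g P))"
          using True by simp
        show ?thesis unfolding idt by (rule vd_diff[OF a2 a1])
      qed
      have H3: "vd ?N (mv g (mv c v) - mv c (mv g v))"
        using md_eq_vd[of ?N "mm g c" "mm c g" v] True by (simp add: mmul_eq mv_mm)
      have idt: "mv c X - X = (mv c v - v - P) - (F + mv g P - (P + mv c F)) - mv g (mv c v - v - P)
             + (mv g (mv c v) - mv c (mv g v))"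
        unfolding X_def c_def gg vv PP FF by (rule id1)
      show ?thesis unfolding idt by (rule vd_add[OF vd_diff[OF vd_diff[OF H2 H1] vd_mv[OF H2]] H3])
    next
      case False
      then have e: "mmul n c (mmul n g c) = g" using hyp gG c_def by auto
      define Q where "Q = f (mmul n g c)"
      obtain q1 q2 where QQ: "Q = (q1,q2)" by (cases Q) auto
      have gcG: "mmul n g c \<in> G" using sg_mult[OF sg gG cG'] .
      have H1a: "vd ?N (Q - (F + mv g P))" using coc[OF f gG cG'] F_def P_def Q_def by simp
      have H1b: "vd ?N (F - (P + mv c Q))" using coc[OF f cG' gcG]
        unfolding e P_def[symmetric] Q_def[symmetric] F_def[symmetric] .
      have m1: "mmul n c (mmul n g c) = mmod ?N (mm c (mm g c))"
        by (simp only: mmul_eq[of n c] mmul_mmod)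
      have "mmod ?N (mm c (mm g c)) = mmod ?N g"
        unfolding carrier_mmod[OF sg_carr[OF sg gG]] m1[symmetric] e by (rule refl)
      then have "vd ?N (mv (mm c (mm g c)) v - mv g v)" by (rule md_eq_vd)
      then have H3: "vd ?N (mv c (mv g (mv c v)) - mv g v)" by (simp only: mv_mm)
      have idt: "mv c X - X = (mv c v - v - P) - (mv c (mv g (mv c v)) - mv g v) + mv c (mv g (mv c v - v - P))
              - mv c (Q - (F + mv g P)) - (F - (P + mv c Q))"
        unfolding X_def c_def gg vv PP FF QQ by (simp add: algebra_simps)
      show ?thesis unfolding idt by (rule vd_diff[OF vd_diff[OF vd_add[OF vd_diff[OF H2 H3] vd_mv[OF vd_mv[OF H2]]] vd_mv[OF H1a]] H1b])
    qed
    then have "vd ?N X" unfolding c_def by (rule inv_lemma[OF cop])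
    then have "vd ?N (F - (vm ?N (mv g v) - v))"
    proof -
      have idt: "F - (vm ?N (mv g v) - v) = X - (vm ?N (mv g v) - mv g v)" by (simp add: X_def)
      show ?thesis unfolding idt by (rule vd_diff[OF \<open>vd ?N X\<close> vm_vd])
    qed
    then have "vm ?N F = vm ?N (vm ?N (mv g v) - v)" by (rule vm_eq)
    moreover have "vm ?N F = F" using Z1_V[OF f gG] F_def vm_V by simp
    ultimately have "F = vm ?N (vm ?N (mv g v) - v)" by metis
    then show "f g = vsub n (mvec n g v) v" unfolding F_def vsub_eq mvec_eq .
  qed
  then show ?thesis using vV by (auto simp: B1_def)
qed



lemma cop_bez: "s*a + t*N = (1::int) \<Longrightarrow> coprime a N"
proof (rule coprimeI)
  fix c assume "s*a + t*N = 1" "c dvd a" "c dvd N"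
  have "c dvd s*a" "c dvd t*N" using \<open>c dvd a\<close> \<open>c dvd N\<close> by auto
  then have "c dvd s*a + t*N" by (rule dvd_add)
  then show "is_unit c" using \<open>s*a + t*N = 1\<close> by metis
qed

lemma cop_mod1: "(x::int) mod N = 1 mod N \<Longrightarrow> N > 0 \<Longrightarrow> coprime x N"
proof -
  assume h: "x mod N = 1 mod N" "N > 0"
  have "coprime (x mod N) N = coprime x N" using h(2) by (intro coprime_mod_left_iff) simp
  moreover have "coprime (1 mod N) N"
    using h(2) by (cases "N = 1") (auto simp: zmod_trivial_iff)
  ultimately show ?thesis using h(1) by simp
qed

lemma md_split: "coprime (2::int) m \<Longrightarrow> md 2 M \<Longrightarrow> md m M \<Longrightarrow> md (2*m) M"
  by (cases M) (auto simp: divides_mult)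

lemma md_msc: "md m (msc m X)"
  by (cases X) auto

lemma odd_det: "coprime x (2*(m::int)) \<Longrightarrow> odd x"
proof
  assume "coprime x (2*m)" "even x"
  then have "is_unit (2::int)" using coprime_common_divisor by (metis dvd_triv_left)
  then show False by simp
qed

lemma parity_case:
  assumes "odd (a*d - b*cc)" "m = 2*j+1"
  shows "md 2 (mm (a,b,cc,d) (m-1,m,m,2*m-1) - mm (m-1,m,m,2*m-1) (a,b,cc,d)) \<or>
         md 2 (mm (m-1,m,m,2*m-1) (mm (a,b,cc,d) (m-1,m,m,2*m-1)) - (a,b,cc,d))"
  using assms by (cases "even a"; cases "even b"; cases "even cc"; cases "even d"; simp)



lemma odd_case:
  assumes n: "n > 0" and on: "odd n" and sg: "subgroup G (GL2 n)" and sl: "SL2plus n \<subseteq> G"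
    and f: "f \<in> Z1 n G"
  shows "f \<in> B1 n G"
proof -
  let ?N = "int n"
  obtain k0 where "n = 2*k0+1" using on by (rule oddE)
  then obtain k where k: "?N = 2*k+1" by (intro that[of "int k0"]) simp
  have dv: "?N dvd (?N-1)*(?N-1) - 0*0 - 1"
    unfolding dvd_def by (rule exI[of _ "?N - 2"]) (simp add: algebra_simps)
  have cS: "(?N-1, 0, 0, ?N-1) \<in> SL2 n"
  proof -
    have "coprime ((?N-1)*(?N-1) - 0*0) ?N"
      by (rule cop_bez[of 1 _ "-(?N-2)"]) (simp add: algebra_simps)
    moreover have "((?N-1)*(?N-1) - 0*0) mod ?N = 1 mod ?N"
      using dv by (simp add: mod_eq_dvd_iff)
    ultimately show ?thesis using n by (simp add: SL2_def GL2_def)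
  qed
  then have cG: "(?N-1, 0, 0, ?N-1) \<in> G" using sl on by (auto simp: SL2plus_def)
  have cop: "coprime ((?N-1-1)*(?N-1-1) - 0*0) ?N"
    by (rule cop_bez[of "(k+1)^2" _ "-((k+1)^2*(?N-4)+?N+2)"]) (simp add: k algebra_simps power2_eq_square)
  have hyp: "\<forall>g\<in>G. mmul n g (?N-1, 0, 0, ?N-1) = mmul n (?N-1, 0, 0, ?N-1) g \<or>
                     mmul n (?N-1, 0, 0, ?N-1) (mmul n g (?N-1, 0, 0, ?N-1)) = g"
  proof
    fix g assume "g \<in> G"
    obtain a b cc d where "g = (a,b,cc,d)" by (cases g) auto
    then show "mmul n g (?N-1, 0, 0, ?N-1) = mmul n (?N-1, 0, 0, ?N-1) g \<or>
                     mmul n (?N-1, 0, 0, ?N-1) (mmul n g (?N-1, 0, 0, ?N-1)) = g"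
      by (simp add: algebra_simps)
  qed
  show ?thesis by (rule capproach[OF n sg f cG cop hyp])
qed

lemma perm2_c:
  assumes "M = 2*j+1"
  shows "perm2 (M-1, M, M, 2*M-1) = Transposition.transpose (1,0) (0,1) \<circ> Transposition.transpose (0,1) (1,1)"
proof
  fix v :: vec2
  obtain x y where v: "v = (x,y)" by (cases v) auto
  show "perm2 (M-1, M, M, 2*M-1) v = (Transposition.transpose (1,0) (0,1) \<circ> Transposition.transpose (0,1) (1,1)) v"
    using assms by (auto simp: v perm2_def nonzero2_def transpose_def algebra_simps; presburger)
qed

lemma sign_c:
  assumes "M = 2*j+1"
  shows "sign (perm2 (M-1, M, M, 2*M-1)) = (1::int)"
  unfolding perm2_c[OF assms]
  by (simp add: sign_compose permutation_swap_id sign_swap_id)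



lemma scalar_approach:
  assumes n: "n > 0" and sg: "subgroup G (GL2 n)" and f: "f \<in> Z1 n G"
    and zG: "(l,0,0,l) \<in> G" and dv: "int n dvd K - kap*(l-1)"
  shows "(\<lambda>g. vscale n K (f g)) \<in> B1 n G"
proof -
  let ?N = "int n"
  define z :: mat2 where "z = (l,0,0,l)"
  have zG': "z \<in> G" using zG z_def by simp
  define P where "P = f z"
  define w where "w = vm ?N (sv kap P)"
  have hw: "vd ?N (sv kap P - w)"
  proof -
    have "sv kap P - w = - (w - sv kap P)" by simp
    then show ?thesis unfolding w_def using vd_uminus[OF vm_vd[of ?N "sv kap P"]] by simp
  qed
  have "\<forall>g\<in>G. vscale n K (f g) = vsub n (mvec n g w) w"
  proof
    fix g assume gG: "g \<in> G"
    define F where "F = f g"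
    obtain g1 g2 g3 g4 where gg: "g = (g1,g2,g3,g4)" by (cases g) auto
    obtain w1 w2 where ww: "w = (w1,w2)" by (cases w) auto
    obtain p1 p2 where PP: "P = (p1,p2)" by (cases P) auto
    obtain x y where FF: "F = (x,y)" by (cases F) auto
    have comm: "mmul n g z = mmul n z g" unfolding gg z_def by (simp add: algebra_simps)
    have a1: "vd ?N (f (mmul n g z) - (F + mv g P))" using coc[OF f gG zG'] unfolding F_def P_def .
    have a2: "vd ?N (f (mmul n z g) - (P + mv z F))" using coc[OF f zG' gG] unfolding F_def P_def .
    have H1: "vd ?N (F + mv g P - (P + mv z F))"
    proof -
      have idt: "F + mv g P - (P + mv z F) = (f (mmul n z g) - (P + mv z F)) - (f (mmul n g z) - (F + mv g P))"
        using comm by simp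
      show ?thesis unfolding idt by (rule vd_diff[OF a2 a1])
    qed
    have idt: "sv K F - (mv g w - w) = sv (K - kap*(l-1)) F - sv kap (F + mv g P - (P + mv z F))
        + (mv g (sv kap P - w) - (sv kap P - w))"
      unfolding gg ww PP FF z_def by (simp add: algebra_simps)
    have "vd ?N (sv K F - (mv g w - w))"
      unfolding idt by (rule vd_add[OF vd_diff[OF vd_sv2[OF dv] vd_sv[OF H1]] vd_diff[OF vd_mv[OF hw] hw]])
    then have e1: "vm ?N (sv K F) = vm ?N (mv g w - w)" by (rule vm_eq)
    have "vd ?N ((vm ?N (mv g w) - w) - (mv g w - w))"
    proof -
      have "(vm ?N (mv g w) - w) - (mv g w - w) = vm ?N (mv g w) - mv g w" by simp
      then show ?thesis using vm_vd[of ?N "mv g w"] by simp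
    qed
    then have e2: "vm ?N (vm ?N (mv g w) - w) = vm ?N (mv g w - w)" by (rule vm_eq)
    show "vscale n K (f g) = vsub n (mvec n g w) w"
      unfolding vscale_eq vsub_eq mvec_eq F_def[symmetric] e1 e2 ..
  qed
  moreover have "w \<in> V n" using n by (simp add: w_def vm_in_V)
  ultimately show ?thesis by (auto simp: B1_def)
qed



lemma r1_case:
  assumes n: "n = 2*m" and om: "odd m" and sg: "subgroup G (GL2 n)" and sl: "SL2plus n \<subseteq> G"
    and f: "f \<in> Z1 n G"
  shows "f \<in> B1 n G"
proof -
  let ?N = "int n" and ?M = "int m"
  obtain j0 where "m = 2*j0+1" using om by (rule oddE)
  then obtain j where j: "?M = 2*j+1" by (intro that[of "int j0"]) simp
  have N: "?N = 2*?M" using n by simp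
  have n0: "n > 0" using n om by (cases m) auto
  have cop2: "coprime (2::int) ?M" by (rule cop_bez[of "-j" _ 1]) (simp add: j)
  define c :: mat2 where "c = (?M-1, ?M, ?M, 2*?M-1)"
  have cSL: "c \<in> SL2 n"
  proof -
    have dv: "?N dvd (?M-1)*(2*?M-1) - ?M*?M - 1"
      unfolding dvd_def N by (rule exI[of _ "j - 1"]) (simp add: j algebra_simps)
    then have md1: "((?M-1)*(2*?M-1) - ?M*?M) mod ?N = 1 mod ?N" by (simp add: mod_eq_dvd_iff)
    then have "coprime ((?M-1)*(2*?M-1) - ?M*?M) ?N" using n0 by (intro cop_mod1) auto
    moreover have pos: "0 < 1 + 2*j" using j \<open>m = 2*j0+1\<close> by simp
    ultimately show ?thesis using md1 j n pos by (simp add: c_def SL2_def GL2_def)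
  qed
  have "c \<in> SL2plus n"
    using cSL sign_c[OF j] n by (simp add: SL2plus_def c_def)
  then have cG: "(?M-1, ?M, ?M, 2*?M-1) \<in> G" using sl c_def by auto
  have cop: "coprime ((?M-1-1)*(2*?M-1-1) - ?M*?M) ?N"
  proof -
    have a: "coprime ((?M-1-1)*(2*?M-1-1) - ?M*?M) 2"
      by (rule cop_bez[of "-1" _ "2*j*j - 4*j"]) (simp add: j algebra_simps)
    have b: "coprime ((?M-1-1)*(2*?M-1-1) - ?M*?M) ?M"
      by (rule cop_bez[of "(j+1)^2" _ "-((j+1)^2*(?M-6)+?M+2)"]) (simp add: j algebra_simps power2_eq_square)
    show ?thesis unfolding N using a b by simp
  qed
  have hyp: "\<forall>g\<in>G. mmul n g (?M-1, ?M, ?M, 2*?M-1) = mmul n (?M-1, ?M, ?M, 2*?M-1) g \<or>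
                     mmul n (?M-1, ?M, ?M, 2*?M-1) (mmul n g (?M-1, ?M, ?M, 2*?M-1)) = g"
  proof
    fix g assume gG: "g \<in> G"
    have gc: "g \<in> carrier (GL2 n)" by (rule sg_carr[OF sg gG])
    obtain a b cc d where gg: "g = (a,b,cc,d)" by (cases g) auto
    have "coprime (a*d - b*cc) (2*?M)" using gc gg N by (simp add: GL2_def)
    then have od: "odd (a*d - b*cc)" by (rule odd_det)
    define S :: mat2 where "S = (1,1,1,2)"
    have mdM1: "md ?M (mm g c - mm c g)"
    proof -
      have "mm g c - mm c g = msc ?M (mm g S - mm S g)"
        unfolding gg c_def S_def by (simp add: algebra_simps)
      then show ?thesis using md_msc by metis
    qed
    have mdM2: "md ?M (mm c (mm g c) - g)"
    proof -
      have "mm c (mm g c) - g = msc ?M (msc ?M (mm S (mm g S)) - mm S g - mm g S)"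
        unfolding gg c_def S_def by (simp add: algebra_simps)
      then show ?thesis using md_msc by metis
    qed
    have m1: "mmul n c (mmul n g c) = mmod ?N (mm c (mm g c))"
      by (simp only: mmul_eq[of n c] mmul_mmod)
    have gm: "mmod ?N g = g" by (rule carrier_mmod[OF gc])
    from parity_case[OF od j] have "md 2 (mm g c - mm c g) \<or> md 2 (mm c (mm g c) - g)"
      unfolding gg c_def .
    then show "mmul n g (?M-1, ?M, ?M, 2*?M-1) = mmul n (?M-1, ?M, ?M, 2*?M-1) g \<or>
                     mmul n (?M-1, ?M, ?M, 2*?M-1) (mmul n g (?M-1, ?M, ?M, 2*?M-1)) = g"
    proof
      assume "md 2 (mm g c - mm c g)"
      then have "md ?N (mm g c - mm c g)" unfolding N using md_split[OF cop2 _ mdM1] by blast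
      then have "mmod ?N (mm g c) = mmod ?N (mm c g)" by (rule mmod_eq)
      then show ?thesis unfolding c_def[symmetric] mmul_eq by blast
    next
      assume "md 2 (mm c (mm g c) - g)"
      then have "md ?N (mm c (mm g c) - g)" unfolding N using md_split[OF cop2 _ mdM2] by blast
      then have "mmod ?N (mm c (mm g c)) = mmod ?N g" by (rule mmod_eq)
      then have "mmul n c (mmul n g c) = g" unfolding m1 gm .
      then show ?thesis unfolding c_def by blast
    qed
  qed
  show ?thesis by (rule capproach[OF n0 sg f cG cop hyp])
qed



lemma r2_case:
  assumes n: "n = 2^r * m" and om: "odd m" and r: "r \<ge> 2" and sg: "subgroup G (GL2 n)"
    and sl: "SL2plus n \<subseteq> G" and f: "f \<in> Z1 n G"
  shows "(\<lambda>g. vscale n (2^(r-1)) (f g)) \<in> B1 n G"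
proof -
  let ?N = "int n" and ?M = "int m"
  define P2 :: int where "P2 = 2^(r-2)"
  have m0: "m > 0" using om by (cases m) auto
  have n0: "n > 0" using n m0 by simp
  have p4: "(2::int)^r = 4*P2" unfolding P2_def using r
    by (metis le_add_diff_inverse power_add power2_eq_square numeral_Bit0 mult_2 numeral_One mult_1)
  have p2: "(2::int)^(r-1) = 2*P2" unfolding P2_def using r
    by (metis Suc_diff_le Suc_1 diff_Suc_Suc power_Suc)
  have N: "?N = 4*P2*?M" using n p4 by simp
  have ne: "even n" using n r by simp
  obtain j0 where "m = 2*j0+1" using om by (rule oddE)
  then have "coprime (2::int) ?M" by (intro cop_bez[of "- int j0" _ 1]) simp
  then have "coprime (4*P2) ?M" unfolding p4[symmetric] by simp
  then obtain u w where uw: "u*(4*P2) + w*?M = 1" using bezout_int[of "4*P2" ?M] by auto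
  define l where "l = 1 + 2*P2*w*?M - 8*u*P2"
  define kap where "kap = w*?M - 4*u*P2*P2"
  have E: "w*?M = 1 - 4*u*P2" using uw by (simp add: algebra_simps)
  have lE: "l = 1 + 2*P2*(1 - 4*u*P2) - 8*u*P2"
  proof -
    have "l = 1 + 2*P2*(w*?M) - 8*u*P2" by (simp add: l_def algebra_simps)
    then show ?thesis unfolding E .
  qed
  have kE: "kap = (1 - 4*u*P2) - 4*u*P2*P2" unfolding kap_def E ..
  have dv: "?N dvd 2*P2 - kap*(l-1)"
  proof -
    have r1: "(4*P2*?M) * (w*(4*u*P2 + 2*u + 2*u*P2^2)) = 4*P2*(w*?M)*(4*u*P2 + 2*u + 2*u*P2^2)"
      by (simp add: algebra_simps)
    have "2*P2 - kap*(l-1) = (4*P2*?M) * (w*(4*u*P2 + 2*u + 2*u*P2^2))"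
      unfolding r1 E lE kE by (simp add: algebra_simps power2_eq_square)
    then show ?thesis unfolding N by simp
  qed
  have dv2: "?N dvd l*l - 1"
  proof -
    have r1: "(4*P2*?M) * (w*(w*?M - 4*u)*(1+P2)) = 4*P2*(w*?M)*((w*?M) - 4*u)*(1+P2)"
      by (simp add: algebra_simps)
    have "l*l - 1 = (4*P2*?M) * (w*(w*?M - 4*u)*(1+P2))"
      unfolding r1 unfolding E lE by (simp add: algebra_simps power2_eq_square)
    then show ?thesis unfolding N by simp
  qed
  define l' where "l' = l mod ?N"
  have l'dv: "?N dvd l' - l" unfolding l'_def by (rule dvd_mod_diff)
  have l'm: "l'*l' mod ?N = 1 mod ?N"
    using dv2 unfolding l'_def by (simp add: mod_mult_eq mod_eq_dvd_iff)
  have l'odd: "l' mod 2 = 1"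
  proof -
    have "(2::int) dvd ?N" using ne by simp
    then have "l' mod 2 = l mod 2" unfolding l'_def by (rule mod_mod_cancel)
    also have "l mod 2 = 1"
    proof -
      have "l = 1 + 2*(P2*w*?M - 4*u*P2)" by (simp add: l_def algebra_simps)
      moreover have "(1 + 2*(k::int)) mod 2 = 1" for k by presburger
      ultimately show ?thesis by metis
    qed
    finally show ?thesis .
  qed
  have zS: "(l', 0, 0, l') \<in> SL2 n"
  proof -
    have "coprime (l'*l' - 0*0) ?N" using l'm n0 by (intro cop_mod1) auto
    moreover have "0 \<le> l'" "l' < ?N" using n0 unfolding l'_def by auto
    ultimately show ?thesis using l'm by (simp add: SL2_def GL2_def)
  qed
  have "perm2 (l', 0, 0, l') = id"
  proof
    fix v :: vec2
    obtain x y where v: "v = (x,y)" by (cases v) auto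
    show "perm2 (l', 0, 0, l') v = id v"
      using l'odd by (auto simp: v perm2_def nonzero2_def)
  qed
  then have "(l', 0, 0, l') \<in> SL2plus n" using zS ne by (simp add: SL2plus_def)
  then have zG: "(l', 0, 0, l') \<in> G" using sl by auto
  have dv': "?N dvd 2*P2 - kap*(l'-1)"
  proof -
    have "2*P2 - kap*(l'-1) = (2*P2 - kap*(l-1)) - kap*(l' - l)" by (simp add: algebra_simps)
    then show ?thesis using dv l'dv by (metis dvd_diff dvd_mult)
  qed
  show ?thesis unfolding p2 by (rule scalar_approach[OF n0 sg f zG dv'])
qed


lemma sv_one: "sv 1 u = u" by (cases u) auto

theorem proposition4p2:
  fixes n :: nat and G :: "mat2 set"
  assumes "n > 0"
    and "subgroup G (GL2 n)"
    and "SL2plus n \<subseteq> G"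
  shows "(odd n \<longrightarrow> Z1 n G \<subseteq> B1 n G)
       \<and> (\<forall>r m. n = 2^r * m \<and> odd m \<and> r \<ge> 1 \<longrightarrow>
            (\<forall>f\<in>Z1 n G. (\<lambda>g. vscale n (2^(r-1)) (f g)) \<in> B1 n G))"
proof
  show "odd n \<longrightarrow> Z1 n G \<subseteq> B1 n G" using odd_case[OF assms(1) _ assms(2) assms(3)] by blast
next
  show "\<forall>r m. n = 2^r * m \<and> odd m \<and> r \<ge> 1 \<longrightarrow>
            (\<forall>f\<in>Z1 n G. (\<lambda>g. vscale n (2^(r-1)) (f g)) \<in> B1 n G)"
  proof (intro allI impI ballI)
    fix r m f assume h: "n = 2^r * m \<and> odd m \<and> r \<ge> 1" and f: "f \<in> Z1 n G"
    show "(\<lambda>g. vscale n (2^(r-1)) (f g)) \<in> B1 n G"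
    proof (cases "r = 1")
      case True
      then have n2: "n = 2*m" using h by simp
      have "f \<in> B1 n G" using r1_case[OF n2 _ assms(2) assms(3) f] h by blast
      then obtain v where v: "v \<in> V n" "\<forall>g\<in>G. f g = vsub n (mvec n g v) v" by (auto simp: B1_def)
      have "\<forall>g\<in>G. vscale n (2^(r-1)) (f g) = f g"
        using True by (auto simp: vscale_eq sv_one vm_V Z1_V[OF f])
      then show ?thesis using v by (auto simp: B1_def)
    next
      case False
      then have "r \<ge> 2" using h by simp
      then show ?thesis using r2_case[of n r m G f] h assms f by blast
    qed
  qed
qed

end
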